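(* The global Kuroda principle is strictly stronger than the local Kuroda principle: every descriptive $\mathsf{MS4}$-frame satisfying the global Kuroda principle satisfies the local Kuroda principle, and there is a finite $\mathsf{MS4}$-frame satisfying the local Kuroda principle but not the global Kuroda principle.
   Context: A descriptive $\mathsf{MS4}$-frame is $(Y,R,E)$ with $Y$ a Stone space, $R$ a continuous quasi-order, $E$ a continuous equivalence relation (continuous: $R[x]=\{y:xRy\}$ closed for all $x$, $R^{-1}[U]$ clopen for clopen $U$), such that $xEy$, $yRz$ imply $\exists u$ with $xRu$, $uEz$; finite $\mathsf{MS4}$-frames (with the discrete topology) are descriptive. $\operatorname{qmax}Y=\{x: xRy\Rightarrow yRx\}$; $xE_Ry$ iff $xRy$ and $yRx$. Global Kuroda principle: for every $x\in\operatorname{qmax}Y$, $E[x]\subseteq\operatorname{qmax}Y$. Local Kuroda principle: for every $x\in\operatorname{qmax}Y$ there is $y$ with $xE_Ry$ and $E[y]\subseteq\operatorname{qmax}Y$. *)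

theory Defs
  imports "HOL-Analysis.Analysis"
begin

definition stone_space :: "'a topology \<Rightarrow> bool" where
  "stone_space T \<longleftrightarrow> compact_space T \<and> Hausdorff_space T \<and>
     (\<forall>U x. openin T U \<and> x \<in> U \<longrightarrow>
        (\<exists>V. openin T V \<and> closedin T V \<and> x \<in> V \<and> V \<subseteq> U))"

definition continuous_rel :: "'a topology \<Rightarrow> 'a rel \<Rightarrow> bool" where
  "continuous_rel T R \<longleftrightarrow>
     (\<forall>x \<in> topspace T. closedin T (R `` {x})) \<and>
     (\<forall>U. openin T U \<and> closedin T U \<longrightarrow>
        openin T ((R\<inverse>) `` U) \<and> closedin T ((R\<inverse>) `` U))"

definition quasi_order_on :: "'a set \<Rightarrow> 'a rel \<Rightarrow> bool" where
  "quasi_order_on Y R \<longleftrightarrow> R \<subseteq> Y \<times> Y \<and> refl_on Y R \<and> trans R"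

definition ms4_frame :: "'a set \<Rightarrow> 'a rel \<Rightarrow> 'a rel \<Rightarrow> bool" where
  "ms4_frame Y R E \<longleftrightarrow> quasi_order_on Y R \<and> equiv Y E \<and>
     (\<forall>x y z. (x, y) \<in> E \<and> (y, z) \<in> R \<longrightarrow> (\<exists>u. (x, u) \<in> R \<and> (u, z) \<in> E))"

definition descriptive_ms4_frame :: "'a topology \<Rightarrow> 'a rel \<Rightarrow> 'a rel \<Rightarrow> bool" where
  "descriptive_ms4_frame T R E \<longleftrightarrow> stone_space T \<and> ms4_frame (topspace T) R E \<and>
     continuous_rel T R \<and> continuous_rel T E"

definition qmax :: "'a set \<Rightarrow> 'a rel \<Rightarrow> 'a set" where
  "qmax Y R = {x \<in> Y. \<forall>y. (x, y) \<in> R \<longrightarrow> (y, x) \<in> R}"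

definition global_kuroda :: "'a set \<Rightarrow> 'a rel \<Rightarrow> 'a rel \<Rightarrow> bool" where
  "global_kuroda Y R E \<longleftrightarrow> (\<forall>x \<in> qmax Y R. E `` {x} \<subseteq> qmax Y R)"

definition local_kuroda :: "'a set \<Rightarrow> 'a rel \<Rightarrow> 'a rel \<Rightarrow> bool" where
  "local_kuroda Y R E \<longleftrightarrow> (\<forall>x \<in> qmax Y R. \<exists>y. (x, y) \<in> R \<and> (y, x) \<in> R \<and> E `` {y} \<subseteq> qmax Y R)"

end

theory Submission
  imports Defs
begin

definition exR :: "nat rel" where
  "exR = {(0,0),(1,1),(2,2),(0,1),(1,0),(2,0),(2,1)}"
definition exE :: "nat rel" where
  "exE = {(0,0),(1,1),(2,2),(0,2),(2,0)}"

lemma ex_m: "(x, y) \<in> exE \<Longrightarrow> (y, z) \<in> exR \<Longrightarrow> \<exists>u. (x, u) \<in> exR \<and> (u, z) \<in> exE"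
  unfolding exE_def exR_def
  apply (simp only: insert_iff empty_iff prod.inject)
  apply (elim disjE conjE; simp; blast)
  done

lemma ex_frame: "ms4_frame {0,1,2} exR exE"
  unfolding ms4_frame_def quasi_order_on_def equiv_def
  using ex_m
  by (auto simp: exR_def exE_def refl_on_def trans_def sym_def)

lemma ex_qmax: "qmax {0,1,2} exR = {0,1}"
  unfolding qmax_def exR_def by auto

lemma ex_desc: "descriptive_ms4_frame (discrete_topology {0,1,2}) exR exE"
proof -
  have R: "exR \<subseteq> {0,1,2} \<times> {0,1,2}" "exE \<subseteq> {0,1,2} \<times> {0,1,2}"
    unfolding exR_def exE_def by auto
  have s: "stone_space (discrete_topology ({0,1,2}::nat set))"
  proof -
    have "\<forall>U x. openin (discrete_topology ({0,1,2}::nat set)) U \<and> x \<in> U \<longrightarrow>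
        (\<exists>V. openin (discrete_topology {0,1,2}) V \<and> closedin (discrete_topology {0,1,2}) V \<and> x \<in> V \<and> V \<subseteq> U)"
    proof (intro allI impI)
      fix U x assume "openin (discrete_topology ({0,1,2}::nat set)) U \<and> x \<in> U"
      then show "\<exists>V. openin (discrete_topology {0,1,2}) V \<and> closedin (discrete_topology {0,1,2}) V \<and> x \<in> V \<and> V \<subseteq> U"
        by (intro exI[of _ U]) simp
    qed
    moreover have "compact_space (discrete_topology ({0,1,2}::nat set))"
      by (simp add: compact_space_discrete_topology)
    moreover have "Hausdorff_space (discrete_topology ({0,1,2}::nat set))"
      by simp
    ultimately show ?thesis unfolding stone_space_def by blast
  qed
  have c: "continuous_rel (discrete_topology {0,1,2}) Q" if "Q \<subseteq> {0,1,2} \<times> {0,1,2}" for Q :: "nat rel"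
  proof -
    have "\<forall>x \<in> topspace (discrete_topology ({0,1,2}::nat set)). closedin (discrete_topology {0,1,2}) (Q `` {x})"
      using that by (simp only: closedin_discrete_topology) blast
    moreover have "\<forall>U. openin (discrete_topology ({0,1,2}::nat set)) U \<and> closedin (discrete_topology {0,1,2}) U \<longrightarrow>
        openin (discrete_topology {0,1,2}) ((Q\<inverse>) `` U) \<and> closedin (discrete_topology {0,1,2}) ((Q\<inverse>) `` U)"
      using that by (simp only: closedin_discrete_topology openin_discrete_topology) blast
    ultimately show ?thesis unfolding continuous_rel_def by blast
  qed
  show ?thesis unfolding descriptive_ms4_frame_def
    using s c[OF R(1)] c[OF R(2)] ex_frame topspace_discrete_topology[of "{0,1,2}::nat set"] by (simp only:)
qed

theorem proposition4p3:
  shows "(\<forall>(T :: 'a topology) R E. descriptive_ms4_frame T R E \<and> global_kuroda (topspace T) R E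
            \<longrightarrow> local_kuroda (topspace T) R E)
       \<and> (\<exists>(Y :: nat set) R E. finite Y \<and> ms4_frame Y R E \<and>
            descriptive_ms4_frame (discrete_topology Y) R E \<and>
            local_kuroda Y R E \<and> \<not> global_kuroda Y R E)"
proof
  show "\<forall>(T :: 'a topology) R E. descriptive_ms4_frame T R E \<and> global_kuroda (topspace T) R E
            \<longrightarrow> local_kuroda (topspace T) R E"
  proof (intro allI impI)
    fix T :: "'a topology" and R E
    assume a: "descriptive_ms4_frame T R E \<and> global_kuroda (topspace T) R E"
    then have r: "refl_on (topspace T) R"
      by (simp add: descriptive_ms4_frame_def ms4_frame_def quasi_order_on_def)
    show "local_kuroda (topspace T) R E"
      unfolding local_kuroda_def
    proof
      fix x assume x: "x \<in> qmax (topspace T) R"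
      then have "x \<in> topspace T" by (simp add: qmax_def)
      then have "(x,x) \<in> R" using r by (simp add: refl_on_def)
      moreover have "E `` {x} \<subseteq> qmax (topspace T) R"
        using a x by (simp add: global_kuroda_def)
      ultimately show "\<exists>y. (x, y) \<in> R \<and> (y, x) \<in> R \<and> E `` {y} \<subseteq> qmax (topspace T) R"
        by blast
    qed
  qed
next
  have l: "local_kuroda {0,1,2} exR exE"
  proof -
    have e1: "exE `` {1} = {1}" unfolding exE_def by auto
    have "(0::nat, 1::nat) \<in> exR" "(1::nat, 0::nat) \<in> exR" "(1::nat, 1::nat) \<in> exR"
      unfolding exR_def by simp_all
    then show ?thesis unfolding local_kuroda_def ex_qmax using e1 by blast
  qed
  have g: "\<not> global_kuroda {0,1,2} exR exE"
  proof -
    have "(0::nat, 2::nat) \<in> exE" unfolding exE_def by simp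
    then show ?thesis unfolding global_kuroda_def ex_qmax by auto
  qed
  show "\<exists>(Y :: nat set) R E. finite Y \<and> ms4_frame Y R E \<and>
            descriptive_ms4_frame (discrete_topology Y) R E \<and>
            local_kuroda Y R E \<and> \<not> global_kuroda Y R E"
    apply (rule exI[of _ "{0,1,2}"], rule exI[of _ exR], rule exI[of _ exE])
    using ex_frame ex_desc l g by simp
qed

end
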